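(* Assume the setting in the context, and assume moreover: (i) there is $\bar\nu>0$ with $n\nu_{ni}\le\bar\nu$ for all $i$ and all $n$; (ii) the average dependency neighbourhood size satisfies $d_n=o(n)$; (iii) there exist $p,q\in[2,\infty]$ with $1/p+1/q=1/2$ such that $\sup_{i\in\mathbb N}\|\tilde y_i\|_p<\infty$ and $\sup_{i\in\mathbb N}\|\psi_i\|_q<\infty$. Then $\mathbb E[(\hat\tau_n(z,\omega)-\tau_n)^2]\to0$ as $n\to\infty$, i.e. the aggregate Riesz estimator is consistent in mean square. Moreover, if in addition $\sup_{n\in\mathbb N}d_n<\infty$, then $\hat\tau_n-\tau_n=O_p(n^{-1/2})$.
   Context: Let $(\Omega,\mathcal F,P)$ be a probability space (latent environment) and $\mathcal Z$ a measurable space of treatment assignments with a known randomisation probability measure $\mu$. For units $i=1,\dots,n$, the potential outcome is a measurable map $\tilde y_i:\mathcal Z\times\Omega\to\mathbb R$ of the form $\tilde y_i(z,\omega)=y_i(z,x_i(\omega),\epsilon_i(\omega))$ with $y_i,x_i,\epsilon_i$ measurable. For $p\ge1$, $L^p=L^p(\mathcal Z\times\Omega)$ is the space of measurable $u$ with $\|u\|_p=(\int|u(z,\omega)|^p\mu(\mathrm dz)P(\mathrm d\omega))^{1/p}<\infty$; $\mathbb E$ denotes expectation with respect to $\mu(\mathrm dz)P(\mathrm d\omega)$. Each $\tilde y_i$ lies in a model space $\mathcal M_i\subset L^2$ (taken closed) with inner product $\langle u,v\rangle=\mathbb E[uv]$. The treatment effect $\theta_i$ is a continuous linear functional on $\mathcal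 M_i$ with Riesz representer $\psi_i\in\mathcal M_i$, i.e. $\theta_i(u)=\langle u,\psi_i\rangle$ for all $u\in\mathcal M_i$. The Riesz estimator is $\hat\theta_i(z,\omega)=\tilde y_i(z,\omega)\psi_i(z,\omega)$. Given weights $\nu_{ni}\ge0$, $\tau_n=\sum_{i=1}^n\nu_{ni}\theta_i(\tilde y_i)$ and $\hat\tau_n(z,\omega)=\sum_{i=1}^n\nu_{ni}\hat\theta_i(z,\omega)$. Dependency neighbourhoods: for each $i$, $N_i$ is the intersection of all subsets $M\subset\{1,\dots,n\}$ such that the pair $(\tilde y_i,\psi_i)$ is independent of $\{(\tilde y_j,\psi_j):j\notin M\}$; $d_n=n^{-1}\sum_{i=1}^n|N_i|$. *)

theory Defs
  imports "HOL-Probability.Probability" "HOL-Library.Landau_Symbols"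
begin

definition L2_fun :: "'a measure \<Rightarrow> ('a \<Rightarrow> real) \<Rightarrow> bool" where
  "L2_fun M f \<longleftrightarrow> f \<in> borel_measurable M \<and> integrable M (\<lambda>x. (f x)\<^sup>2)"

definition closed_L2_subspace :: "'a measure \<Rightarrow> ('a \<Rightarrow> real) set \<Rightarrow> bool" where
  "closed_L2_subspace M S \<longleftrightarrow>
     (\<forall>u\<in>S. L2_fun M u) \<and> (\<lambda>_. 0) \<in> S \<and>
     (\<forall>u\<in>S. \<forall>v\<in>S. \<forall>a::real. (\<lambda>x. a * u x + v x) \<in> S) \<and>
     (\<forall>u f. (\<forall>k::nat. u k \<in> S) \<longrightarrow> L2_fun M f \<longrightarrow>
        (\<lambda>k. integral\<^sup>L M (\<lambda>x. (u k x - f x)\<^sup>2)) \<longlonglongrightarrow> 0 \<longrightarrow> f \<in> S)"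

definition Lp_norm_le :: "'a measure \<Rightarrow> ereal \<Rightarrow> ('a \<Rightarrow> real) \<Rightarrow> real \<Rightarrow> bool" where
  "Lp_norm_le M p f C \<longleftrightarrow> f \<in> borel_measurable M \<and> 0 \<le> C \<and>
     (if p = \<infinity> then (AE x in M. \<bar>f x\<bar> \<le> C)
      else (\<integral>\<^sup>+ x. ennreal (\<bar>f x\<bar> powr real_of_ereal p) \<partial>M) \<le> ennreal (C powr real_of_ereal p))"

text \<open>Dependency neighbourhood \<open>N_i\<close> among units \<open>1..n\<close>: intersection of all
  \<open>S \<subseteq> {1..n}\<close> such that \<open>(y_i,\<psi>_i)\<close> (encoded as a
  family indexed by the singleton \<open>{i}\<close>, so both sides live in the same type) is independent of \<open>{(y_j,\<psi>_j) : j \<notin> S}\<close>.\<close>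
definition dep_nbhd :: "'a measure \<Rightarrow> (nat \<Rightarrow> 'a \<Rightarrow> real) \<Rightarrow> (nat \<Rightarrow> 'a \<Rightarrow> real)
    \<Rightarrow> nat \<Rightarrow> nat \<Rightarrow> nat set" where
  "dep_nbhd M y psi n i = \<Inter> {S. S \<subseteq> {1..n} \<and>
     prob_space.indep_var M
       (Pi\<^sub>M {i} (\<lambda>_. borel \<Otimes>\<^sub>M borel)) (\<lambda>x. \<lambda>j\<in>{i}. (y j x, psi j x))
       (Pi\<^sub>M ({1..n} - S) (\<lambda>_. borel \<Otimes>\<^sub>M borel))
       (\<lambda>x. \<lambda>j\<in>{1..n} - S. (y j x, psi j x))}"

definition avg_dep :: "'a measure \<Rightarrow> (nat \<Rightarrow> 'a \<Rightarrow> real) \<Rightarrow> (nat \<Rightarrow> 'a \<Rightarrow> real) \<Rightarrow> nat \<Rightarrow> real" where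
  "avg_dep M y psi n = (\<Sum>i\<in>{1..n}. real (card (dep_nbhd M y psi n i))) / real n"

definition bigO_p :: "'a measure \<Rightarrow> (nat \<Rightarrow> 'a \<Rightarrow> real) \<Rightarrow> (nat \<Rightarrow> real) \<Rightarrow> bool" where
  "bigO_p M X r \<longleftrightarrow> (\<forall>\<epsilon>>0. \<exists>K N. \<forall>n\<ge>N.
      measure M {x \<in> space M. \<bar>X n x\<bar> > K * r n} < \<epsilon>)"

end

theory Submission
  imports Defs
begin

lemma ereal_inv1: "(a::real) \<noteq> 0 \<Longrightarrow> 1 / ereal a = ereal (1/a)"
  by (simp add: divide_ereal_def one_ereal_def divide_inverse)

lemma ereal_half: "(1::ereal) / 2 = ereal (1/2)"
  using ereal_inv1[of 2] by (simp add: numeral_eq_ereal)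

lemma ereal_inf_inv: "1 / (\<infinity>::ereal) = 0"
  by (simp add: divide_ereal_def)

lemma pq_cases:
  fixes p q :: ereal
  assumes "2 \<le> p" "2 \<le> q" "1 / p + 1 / q = 1 / 2"
  shows "(p = \<infinity> \<and> q = 2) \<or> (q = \<infinity> \<and> p = 2) \<or>
         (\<exists>a b. p = ereal a \<and> q = ereal b \<and> 2 < a \<and> 2 < b \<and> 1/a + 1/b = 1/2)"
proof (cases p; cases q)
  fix a b assume ab: "p = ereal a" "q = ereal b"
  then have a: "2 \<le> a" and b: "2 \<le> b" using assms by auto
  then have "ereal (1/a + 1/b) = ereal (1/2)" using assms(3) ab
    by (simp add: ereal_inv1 ereal_half)
  then have e: "1/a + 1/b = 1/2" by simp
  have "1/a > 0" "1/b > 0" using a b by auto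
  then have "1/a < 1/2" "1/b < 1/2" using e by linarith+
  then have "2 < a" "2 < b" using a b by (auto simp: field_simps)
  with e show ?thesis using ab by auto
next
  fix a assume ab: "p = ereal a" "q = \<infinity>"
  then have "2 \<le> a" using assms by auto
  then have "ereal (1/a) = ereal (1/2)" using assms(3) ab
    by (simp add: ereal_inv1 ereal_half ereal_inf_inv)
  then have "a = 2" by simp
  then show ?thesis using ab by (simp add: numeral_eq_ereal)
next
  fix b assume ab: "p = \<infinity>" "q = ereal b"
  then have "2 \<le> b" using assms by auto
  then have "ereal (1/b) = ereal (1/2)" using assms(3) ab
    by (simp add: ereal_inv1 ereal_half ereal_inf_inv)
  then have "b = 2" by simp
  then show ?thesis using ab by (simp add: numeral_eq_ereal)
next
  assume "p = \<infinity>" "q = \<infinity>"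
  then have "(1::ereal) / 2 = 0" using assms(3) by (simp add: ereal_inf_inv)
  then have "ereal (1/2) = 0" unfolding ereal_half .
  then show ?thesis by simp
qed (use assms in simp_all)

lemma nn_bound_int:
  fixes f :: "'a \<Rightarrow> real"
  assumes "f \<in> borel_measurable M" "\<And>x. 0 \<le> f x"
    "(\<integral>\<^sup>+x. ennreal (f x) \<partial>M) \<le> ennreal C" "0 \<le> C"
  shows "integrable M f \<and> integral\<^sup>L M f \<le> C"
proof -
  have i: "integrable M f"
  proof (rule integrableI_bounded)
    show "f \<in> borel_measurable M" by (rule assms(1))
    have "(\<integral>\<^sup>+x. ennreal (norm (f x)) \<partial>M) = (\<integral>\<^sup>+x. ennreal (f x) \<partial>M)"
      using assms(2) by simp
    also have "\<dots> \<le> ennreal C" by (rule assms(3))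
    also have "\<dots> < \<infinity>" by simp
    finally show "(\<integral>\<^sup>+x. ennreal (norm (f x)) \<partial>M) < \<infinity>" .
  qed
  have "ennreal (integral\<^sup>L M f) \<le> ennreal C"
    using nn_integral_eq_integral[OF i] assms(2,3) by simp
  with assms(4) have "integral\<^sup>L M f \<le> C" by (simp add: ennreal_le_iff)
  with i show ?thesis by simp
qed

lemma Lp_int:
  fixes f :: "'a \<Rightarrow> real"
  assumes "Lp_norm_le M (ereal a) f C"
  shows "integrable M (\<lambda>x. \<bar>f x\<bar> powr a) \<and> integral\<^sup>L M (\<lambda>x. \<bar>f x\<bar> powr a) \<le> C powr a"
proof (rule nn_bound_int)
  have [measurable]: "f \<in> borel_measurable M" using assms unfolding Lp_norm_le_def by simp
  show "(\<lambda>x. \<bar>f x\<bar> powr a) \<in> borel_measurable M" by measurable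
  show "\<And>x. 0 \<le> \<bar>f x\<bar> powr a" by simp
  have "ereal a \<noteq> \<infinity>" by simp
  then show "(\<integral>\<^sup>+x. ennreal (\<bar>f x\<bar> powr a) \<partial>M) \<le> ennreal (C powr a)"
    using assms unfolding Lp_norm_le_def if_not_P[OF \<open>ereal a \<noteq> \<infinity>\<close>] real_of_ereal.simps by blast
  show "0 \<le> C powr a" by simp
qed

lemma abs_powr2: "\<bar>x::real\<bar> powr 2 = x\<^sup>2"
  by simp

lemma sq_bound_inf:
  fixes f g :: "'a \<Rightarrow> real"
  assumes f: "Lp_norm_le M \<infinity> f Cf" and g: "Lp_norm_le M (ereal 2) g Cg"
  shows "integrable M (\<lambda>x. (f x * g x)\<^sup>2) \<and> (\<integral>x. (f x * g x)\<^sup>2 \<partial>M) \<le> Cf\<^sup>2 * Cg\<^sup>2"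
proof -
  from f have fm[measurable]: "f \<in> borel_measurable M" and Cf: "0 \<le> Cf"
    and ae: "AE x in M. \<bar>f x\<bar> \<le> Cf" unfolding Lp_norm_le_def by auto
  from g have gm[measurable]: "g \<in> borel_measurable M" and Cg: "0 \<le> Cg"
    unfolding Lp_norm_le_def by auto
  from Lp_int[OF g] Cg have gi: "integrable M (\<lambda>x. (g x)\<^sup>2)" "(\<integral>x. (g x)\<^sup>2 \<partial>M) \<le> Cg\<^sup>2"
    by (simp_all add: abs_powr2)
  have bd: "AE x in M. (f x * g x)\<^sup>2 \<le> Cf\<^sup>2 * (g x)\<^sup>2"
    using ae
  proof eventually_elim
    case (elim x)
    have "(f x)\<^sup>2 \<le> Cf\<^sup>2" using elim Cf
      by (metis abs_ge_zero power2_abs power_mono)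
    then show ?case by (simp add: power_mult_distrib mult_right_mono)
  qed
  have gi2: "integrable M (\<lambda>x. Cf\<^sup>2 * (g x)\<^sup>2)" using gi(1) by simp
  have int: "integrable M (\<lambda>x. (f x * g x)\<^sup>2)"
    by (rule Bochner_Integration.integrable_bound[OF gi2]) (use bd in \<open>auto\<close>)
  have "(\<integral>x. (f x * g x)\<^sup>2 \<partial>M) \<le> (\<integral>x. Cf\<^sup>2 * (g x)\<^sup>2 \<partial>M)"
    by (rule integral_mono_AE[OF int gi2 bd])
  also have "\<dots> = Cf\<^sup>2 * (\<integral>x. (g x)\<^sup>2 \<partial>M)" by simp
  also have "\<dots> \<le> Cf\<^sup>2 * Cg\<^sup>2" using gi(2) by (simp add: mult_left_mono)
  finally show ?thesis using int by simp
qed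

lemma sq_bound_fin:
  fixes f g :: "'a \<Rightarrow> real"
  assumes f: "Lp_norm_le M (ereal a) f Cf" and g: "Lp_norm_le M (ereal b) g Cg"
    and ab: "2 < a" "2 < b" "1/a + 1/b = 1/2"
  shows "integrable M (\<lambda>x. (f x * g x)\<^sup>2) \<and>
    (\<integral>x. (f x * g x)\<^sup>2 \<partial>M) \<le> (2/a) * Cf powr a + (2/b) * Cg powr b"
proof -
  from f have fm[measurable]: "f \<in> borel_measurable M" unfolding Lp_norm_le_def by auto
  from g have gm[measurable]: "g \<in> borel_measurable M" unfolding Lp_norm_le_def by auto
  note fi = Lp_int[OF f] and gi = Lp_int[OF g]
  define h where "h x = (2/a) * \<bar>f x\<bar> powr a + (2/b) * \<bar>g x\<bar> powr b" for x
  have hi: "integrable M h" unfolding h_def using fi gi by auto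
  have hint: "(\<integral>x. h x \<partial>M) \<le> (2/a) * Cf powr a + (2/b) * Cg powr b"
  proof -
    have "(2/a) * (\<integral>x. \<bar>f x\<bar> powr a \<partial>M) \<le> (2/a) * Cf powr a"
      using fi ab by (intro mult_left_mono) auto
    moreover have "(2/b) * (\<integral>x. \<bar>g x\<bar> powr b \<partial>M) \<le> (2/b) * Cg powr b"
      using gi ab by (intro mult_left_mono) auto
    moreover have "(\<integral>x. h x \<partial>M) = (2/a) * (\<integral>x. \<bar>f x\<bar> powr a \<partial>M) + (2/b) * (\<integral>x. \<bar>g x\<bar> powr b \<partial>M)"
      unfolding h_def using fi gi by (simp add: Bochner_Integration.integral_add)
    ultimately show ?thesis by linarith
  qed
  have pw: "(f x * g x)\<^sup>2 \<le> h x" for x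
  proof -
    have y: "(f x)\<^sup>2 * (g x)\<^sup>2 \<le> ((f x)\<^sup>2) powr (a/2) / (a/2) + ((g x)\<^sup>2) powr (b/2) / (b/2)"
      by (rule Youngs_inequality) (use ab in \<open>auto simp: field_simps\<close>)
    have e1: "((f x)\<^sup>2) powr (a/2) = \<bar>f x\<bar> powr a"
      by (simp add: abs_powr2[symmetric] powr_powr del: powr_numeral)
    have e2: "((g x)\<^sup>2) powr (b/2) = \<bar>g x\<bar> powr b"
      by (simp add: abs_powr2[symmetric] powr_powr del: powr_numeral)
    show ?thesis using y unfolding e1 e2 h_def by (simp add: power_mult_distrib mult.commute)
  qed
  have int: "integrable M (\<lambda>x. (f x * g x)\<^sup>2)"
    by (rule Bochner_Integration.integrable_bound[OF hi]) (auto intro!: AE_I2 intro: order_trans[OF pw abs_ge_self])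
  have "(\<integral>x. (f x * g x)\<^sup>2 \<partial>M) \<le> (\<integral>x. h x \<partial>M)"
    by (rule integral_mono[OF int hi]) (use pw in auto)
  with hint int show ?thesis by simp
qed

lemma sq_bound:
  fixes f g :: "'a \<Rightarrow> real"
  assumes pq: "2 \<le> p" "2 \<le> q" "1/p + 1/q = 1/2"
    and f: "Lp_norm_le M p f Cf" and g: "Lp_norm_le M q g Cg"
  shows "integrable M (\<lambda>x. (f x * g x)\<^sup>2) \<and>
    (\<integral>x. (f x * g x)\<^sup>2 \<partial>M) \<le> Cf\<^sup>2 * Cg\<^sup>2 + (2 / real_of_ereal p) * Cf powr real_of_ereal p
       + (2 / real_of_ereal q) * Cg powr real_of_ereal q"
proof -
  have nn: "0 \<le> Cf\<^sup>2 * Cg\<^sup>2" "0 \<le> (2 / real_of_ereal p) * Cf powr real_of_ereal p"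
     "0 \<le> (2 / real_of_ereal q) * Cg powr real_of_ereal q"
  proof -
    have "0 \<le> p" "0 \<le> q" using pq by (auto intro: order_trans[of 0 2])
    then have "0 \<le> real_of_ereal p" "0 \<le> real_of_ereal q" by (auto intro: real_of_ereal_pos)
    then show "0 \<le> Cf\<^sup>2 * Cg\<^sup>2" "0 \<le> (2 / real_of_ereal p) * Cf powr real_of_ereal p"
     "0 \<le> (2 / real_of_ereal q) * Cg powr real_of_ereal q" by auto
  qed
  from pq_cases[OF pq] consider "p = \<infinity>" "q = 2" | "q = \<infinity>" "p = 2"
    | a b where "p = ereal a" "q = ereal b" "2 < a" "2 < b" "1/a + 1/b = 1/2" by blast
  then show ?thesis
  proof cases
    case 1
    then have g': "Lp_norm_le M (ereal 2) g Cg" using g by (simp add: numeral_eq_ereal)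
    from sq_bound_inf[OF f[unfolded 1] g'] nn show ?thesis by linarith
  next
    case 2
    then have f': "Lp_norm_le M (ereal 2) f Cf" using f by (simp add: numeral_eq_ereal)
    from sq_bound_inf[OF g[unfolded 2] f'] have h: "integrable M (\<lambda>x. (f x * g x)\<^sup>2)" "(\<integral>x. (f x * g x)\<^sup>2 \<partial>M) \<le> Cf\<^sup>2 * Cg\<^sup>2"
      by (simp_all only: mult.commute[of "g x" "f x" for x] mult.commute[of "Cg\<^sup>2"])
    show ?thesis using h nn by (intro conjI; linarith)
  next
    case 3
    from sq_bound_fin[OF f[unfolded 3(1)] g[unfolded 3(2)] 3(3-5)]
    have h: "integrable M (\<lambda>x. (f x * g x)\<^sup>2)"
      "(\<integral>x. (f x * g x)\<^sup>2 \<partial>M) \<le> (2 / real_of_ereal p) * Cf powr real_of_ereal p + (2 / real_of_ereal q) * Cg powr real_of_ereal q"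
      using 3(1,2) by simp_all
    show ?thesis using h nn by (intro conjI; linarith)
  qed
qed

lemma (in prob_space) indep_var_const2:
  assumes X: "random_variable S X" and c: "c \<in> space T"
  shows "indep_var S X T (\<lambda>_. c)"
proof -
  have ind: "indep_set {X -` A \<inter> space M | A. A \<in> sets S} {(\<lambda>_. c) -` A \<inter> space M | A. A \<in> sets T}"
    unfolding indep_sets2_eq
  proof safe
    fix A assume "A \<in> sets S"
    then show "X -` A \<inter> space M \<in> events" by (rule measurable_sets[OF X])
  next
    fix B assume "B \<in> sets T"
    show "(\<lambda>_. c) -` B \<inter> space M \<in> events" by (cases "c \<in> B") auto
  next
    fix A B assume "A \<in> sets S" "B \<in> sets T"
    show "prob (X -` A \<inter> space M \<inter> ((\<lambda>_. c) -` B \<inter> space M)) =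
          prob (X -` A \<inter> space M) * prob ((\<lambda>_. c) -` B \<inter> space M)"
      by (cases "c \<in> B") (auto simp: prob_space Int_absorb2)
  qed
  show ?thesis
    unfolding indep_var_def indep_vars_def2
  proof
    show "\<forall>i\<in>UNIV. random_variable (case_bool S T i) (case_bool X (\<lambda>_. c) i)"
      using X c by (auto split: bool.split)
    have eq: "(\<lambda>i. {case_bool X (\<lambda>_. c) i -` A \<inter> space M | A. A \<in> sets (case_bool S T i)}) =
      case_bool {X -` A \<inter> space M | A. A \<in> sets S} {(\<lambda>_. c) -` A \<inter> space M | A. A \<in> sets T}"
      by (rule ext) (simp split: bool.split)
    show "indep_sets (\<lambda>i. {case_bool X (\<lambda>_. c) i -` A \<inter> space M | A. A \<in> sets (case_bool S T i)}) UNIV"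
      unfolding eq using ind unfolding indep_set_def .
  qed
qed

lemma (in prob_space) dep_nbhd_sub:
  assumes [measurable]: "\<And>i. y i \<in> borel_measurable M" "\<And>i. psi i \<in> borel_measurable M"
  shows "dep_nbhd M y psi n i \<subseteq> {1..n}"
proof -
  have rv: "random_variable (Pi\<^sub>M {i} (\<lambda>_. borel \<Otimes>\<^sub>M borel)) (\<lambda>x. \<lambda>j\<in>{i}. (y j x, psi j x))"
    by measurable
  have "indep_var
       (Pi\<^sub>M {i} (\<lambda>_. borel \<Otimes>\<^sub>M borel)) (\<lambda>x. \<lambda>j\<in>{i}. (y j x, psi j x))
       (Pi\<^sub>M ({1..n} - {1..n}) (\<lambda>_. borel \<Otimes>\<^sub>M borel))
       (\<lambda>x. \<lambda>j\<in>{1..n} - {1..n}. (y j x, psi j x))"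
  proof -
    have e: "(\<lambda>x. \<lambda>j\<in>{1..n} - {1..n}. (y j x, psi j x)) = (\<lambda>_ _. undefined)"
      by (auto simp: restrict_def)
    show ?thesis unfolding e
      using indep_var_const2[OF rv, of "\<lambda>_. undefined" "Pi\<^sub>M {} (\<lambda>_. borel \<Otimes>\<^sub>M borel)"]
      by (simp add: space_PiM)
  qed
  then have "{1..n} \<in> {S. S \<subseteq> {1..n} \<and>
     indep_var
       (Pi\<^sub>M {i} (\<lambda>_. borel \<Otimes>\<^sub>M borel)) (\<lambda>x. \<lambda>j\<in>{i}. (y j x, psi j x))
       (Pi\<^sub>M ({1..n} - S) (\<lambda>_. borel \<Otimes>\<^sub>M borel))
       (\<lambda>x. \<lambda>j\<in>{1..n} - S. (y j x, psi j x))}" by simp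
  then show ?thesis unfolding dep_nbhd_def by (rule Inter_lower)
qed

lemma (in prob_space) dep_nbhd_indep:
  fixes c :: "nat \<Rightarrow> real"
  assumes [measurable]: "\<And>i. y i \<in> borel_measurable M" "\<And>i. psi i \<in> borel_measurable M"
    and j: "j \<in> {1..n}" "j \<notin> dep_nbhd M y psi n i"
  shows "indep_var borel (\<lambda>x. y i x * psi i x - c i) borel (\<lambda>x. y j x * psi j x - c j)"
proof -
  from j obtain S where S: "S \<subseteq> {1..n}" "j \<notin> S" and ind: "indep_var
       (Pi\<^sub>M {i} (\<lambda>_. borel \<Otimes>\<^sub>M borel)) (\<lambda>x. \<lambda>j\<in>{i}. (y j x, psi j x))
       (Pi\<^sub>M ({1..n} - S) (\<lambda>_. borel \<Otimes>\<^sub>M borel))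
       (\<lambda>x. \<lambda>j\<in>{1..n} - S. (y j x, psi j x))"
    unfolding dep_nbhd_def by blast
  have jS: "j \<in> {1..n} - S" using S j by auto
  have m1: "(\<lambda>f. fst (f i) * snd (f i) - c i) \<in> borel_measurable (Pi\<^sub>M {i} (\<lambda>_. borel \<Otimes>\<^sub>M borel))"
    by measurable
  have m2: "(\<lambda>f. fst (f j) * snd (f j) - c j) \<in> borel_measurable (Pi\<^sub>M ({1..n} - S) (\<lambda>_. borel \<Otimes>\<^sub>M borel))"
    using jS by measurable
  from indep_var_compose[OF ind m1 m2] jS show ?thesis by (simp add: comp_def)
qed

lemma abs_le_1_sq: "\<bar>z::real\<bar> \<le> 1 + z\<^sup>2"
proof -
  have "0 \<le> (\<bar>z\<bar> - 1/2)\<^sup>2" by simp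
  then show ?thesis by (simp add: power2_eq_square algebra_simps)
qed

lemma mult_le_half_sq: "(a::real) * b \<le> (a\<^sup>2 + b\<^sup>2) / 2"
proof -
  have "0 \<le> (a - b)\<^sup>2" by simp
  then show ?thesis by (simp add: power2_eq_square algebra_simps)
qed

lemma abs_mult_le_sq: "\<bar>(a::real) * b\<bar> \<le> a\<^sup>2 + b\<^sup>2"
proof -
  have "\<bar>a\<bar> * \<bar>b\<bar> \<le> (\<bar>a\<bar>\<^sup>2 + \<bar>b\<bar>\<^sup>2) / 2" by (rule mult_le_half_sq)
  moreover have "0 \<le> a\<^sup>2 + b\<^sup>2" by simp
  moreover have "0 \<le> \<bar>a\<bar> * \<bar>b\<bar>" by simp
  ultimately show ?thesis unfolding abs_mult power2_abs by argo
qed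

lemma (in prob_space) core:
  fixes y psi :: "nat \<Rightarrow> 'a \<Rightarrow> real" and c :: "nat \<Rightarrow> real" and \<nu> :: "nat \<Rightarrow> nat \<Rightarrow> real"
  assumes ym[measurable]: "\<And>i. y i \<in> borel_measurable M"
    and psim[measurable]: "\<And>i. psi i \<in> borel_measurable M"
    and sqi: "\<And>i. integrable M (\<lambda>x. (y i x * psi i x)\<^sup>2)"
    and sqb: "\<And>i. (\<integral>x. (y i x * psi i x)\<^sup>2 \<partial>M) \<le> K"
    and c: "\<And>i. c i = (\<integral>x. y i x * psi i x \<partial>M)"
    and nu0: "\<And>i. i \<in> {1..n} \<Longrightarrow> 0 \<le> \<nu> n i"
    and nub: "\<And>i. i \<in> {1..n} \<Longrightarrow> real n * \<nu> n i \<le> \<nu>b"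
    and n: "1 \<le> n"
  shows "integrable M (\<lambda>x. ((\<Sum>i\<in>{1..n}. \<nu> n i * (y i x * psi i x)) - (\<Sum>i\<in>{1..n}. \<nu> n i * c i))\<^sup>2)
    \<and> (\<integral>x. ((\<Sum>i\<in>{1..n}. \<nu> n i * (y i x * psi i x)) - (\<Sum>i\<in>{1..n}. \<nu> n i * c i))\<^sup>2 \<partial>M)
       \<le> \<nu>b\<^sup>2 * K * avg_dep M y psi n / real n"
proof -
  define Z where "Z i x = y i x * psi i x" for i x
  define W where "W i x = Z i x - c i" for i x
  define N where "N i = dep_nbhd M y psi n i" for i
  have Zm[measurable]: "Z i \<in> borel_measurable M" for i unfolding Z_def by measurable
  have Wm[measurable]: "W i \<in> borel_measurable M" for i unfolding W_def by measurable
  have Z2i: "integrable M (\<lambda>x. (Z i x)\<^sup>2)" for i using sqi unfolding Z_def .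
  have Zi: "integrable M (Z i)" for i
  proof (rule Bochner_Integration.integrable_bound[of _ "\<lambda>x. 1 + (Z i x)\<^sup>2"])
    show "integrable M (\<lambda>x. 1 + (Z i x)\<^sup>2)" using Z2i by simp
    show "Z i \<in> borel_measurable M" by measurable
    show "AE x in M. norm (Z i x) \<le> norm (1 + (Z i x)\<^sup>2)"
      by (intro AE_I2) (simp add: abs_le_1_sq)
  qed
  have EZ: "(\<integral>x. Z i x \<partial>M) = c i" for i using c unfolding Z_def by simp
  have Wi: "integrable M (W i)" for i unfolding W_def using Zi by simp
  have EW: "(\<integral>x. W i x \<partial>M) = 0" for i
    unfolding W_def using Zi EZ by (simp add: prob_space)
  have W2e: "(W i x)\<^sup>2 = (Z i x)\<^sup>2 + ((c i)\<^sup>2 - 2 * c i * Z i x)" for i x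
    unfolding W_def by (simp add: power2_diff)
  have W2i: "integrable M (\<lambda>x. (W i x)\<^sup>2)" for i
    unfolding W2e using Z2i Zi by simp
  have EW2: "(\<integral>x. (W i x)\<^sup>2 \<partial>M) \<le> K" for i
  proof -
    have "(\<integral>x. (W i x)\<^sup>2 \<partial>M) = (\<integral>x. (Z i x)\<^sup>2 \<partial>M) + (\<integral>x. ((c i)\<^sup>2 - 2 * c i * Z i x) \<partial>M)"
      unfolding W2e using Z2i Zi by (simp add: Bochner_Integration.integral_add)
    also have "(\<integral>x. ((c i)\<^sup>2 - 2 * c i * Z i x) \<partial>M) = (c i)\<^sup>2 - 2 * c i * c i"
      using Zi EZ by (simp add: prob_space)
    also have "\<dots> \<le> 0" by (simp add: power2_eq_square)
    finally show ?thesis using sqb[of i] unfolding Z_def by simp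
  qed
  have "0 \<le> (\<integral>x. (W 0 x)\<^sup>2 \<partial>M)" by (rule Bochner_Integration.integral_nonneg) simp
  then have K0: "0 \<le> K" using EW2[of 0] by linarith
  have WWi: "integrable M (\<lambda>x. W i x * W j x)" for i j
  proof (rule Bochner_Integration.integrable_bound[of _ "\<lambda>x. (W i x)\<^sup>2 + (W j x)\<^sup>2"])
    show "integrable M (\<lambda>x. (W i x)\<^sup>2 + (W j x)\<^sup>2)" using W2i by simp
    show "(\<lambda>x. W i x * W j x) \<in> borel_measurable M" by measurable
    show "AE x in M. norm (W i x * W j x) \<le> norm ((W i x)\<^sup>2 + (W j x)\<^sup>2)"
      by (intro AE_I2) (simp add: abs_mult_le_sq)
  qed
  have EWW: "(\<integral>x. W i x * W j x \<partial>M) \<le> K" for i j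
  proof -
    have "(\<integral>x. W i x * W j x \<partial>M) \<le> (\<integral>x. ((W i x)\<^sup>2 + (W j x)\<^sup>2) / 2 \<partial>M)"
      by (rule integral_mono[OF WWi]) (use W2i in simp, rule mult_le_half_sq)
    also have "\<dots> = ((\<integral>x. (W i x)\<^sup>2 \<partial>M) + (\<integral>x. (W j x)\<^sup>2 \<partial>M)) / 2"
      using W2i by (simp add: Bochner_Integration.integral_add)
    also have "\<dots> \<le> K" using EW2[of i] EW2[of j] by simp
    finally show ?thesis .
  qed
  have ind0: "(\<integral>x. W i x * W j x \<partial>M) = 0" if "j \<in> {1..n}" "j \<notin> N i" for i j
  proof -
    have "indep_var borel (W i) borel (W j)"
      using dep_nbhd_indep[OF ym psim that(1) that(2)[unfolded N_def], of c]
      unfolding W_def Z_def by simp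
    from indep_var_lebesgue_integral[OF this Wi Wi] show ?thesis by (simp add: EW)
  qed
  have Nsub: "N i \<subseteq> {1..n}" for i unfolding N_def by (rule dep_nbhd_sub[OF ym psim])
  have X_eq: "(\<Sum>i\<in>{1..n}. \<nu> n i * (y i x * psi i x)) - (\<Sum>i\<in>{1..n}. \<nu> n i * c i)
      = (\<Sum>i\<in>{1..n}. \<nu> n i * W i x)" for x
    unfolding W_def Z_def by (simp add: sum_subtractf[symmetric] right_diff_distrib)
  have sq_eq: "(\<Sum>i\<in>{1..n}. \<nu> n i * W i x)\<^sup>2
      = (\<Sum>i\<in>{1..n}. \<Sum>j\<in>{1..n}. \<nu> n i * \<nu> n j * (W i x * W j x))" for x
    by (simp add: power2_eq_square sum_product mult_ac)
  have int: "integrable M (\<lambda>x. \<Sum>i\<in>{1..n}. \<Sum>j\<in>{1..n}. \<nu> n i * \<nu> n j * (W i x * W j x))"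
    using WWi by (intro Bochner_Integration.integrable_sum integrable_mult_right) 
  have Eeq: "(\<integral>x. (\<Sum>i\<in>{1..n}. \<Sum>j\<in>{1..n}. \<nu> n i * \<nu> n j * (W i x * W j x)) \<partial>M)
      = (\<Sum>i\<in>{1..n}. \<Sum>j\<in>{1..n}. \<nu> n i * \<nu> n j * (\<integral>x. W i x * W j x \<partial>M))"
    using WWi by (simp add: Bochner_Integration.integral_sum Bochner_Integration.integrable_sum)
  have npos: "0 < real n" using n by simp
  have nub': "\<nu> n i \<le> \<nu>b / real n" if "i \<in> {1..n}" for i
    using nub[OF that] npos by (simp add: field_simps mult.commute)
  have trm: "\<nu> n i * \<nu> n j * (\<integral>x. W i x * W j x \<partial>M)
      \<le> (if j \<in> N i then (\<nu>b / real n)\<^sup>2 * K else 0)" if ij: "i \<in> {1..n}" "j \<in> {1..n}" for i j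
  proof (cases "j \<in> N i")
    case True
    have nn: "0 \<le> \<nu> n i * \<nu> n j" using nu0 ij by simp
    have "\<nu> n i * \<nu> n j * (\<integral>x. W i x * W j x \<partial>M) \<le> \<nu> n i * \<nu> n j * K"
      by (rule mult_left_mono[OF EWW nn])
    also have "\<nu> n i * \<nu> n j \<le> (\<nu>b / real n)\<^sup>2"
      unfolding power2_eq_square using nub' ij nu0 by (intro mult_mono) (auto intro: order_trans[OF nu0 nub'])
    then have "\<nu> n i * \<nu> n j * K \<le> (\<nu>b / real n)\<^sup>2 * K" using K0 by (rule mult_right_mono)
    finally show ?thesis using True by simp
  next
    case False
    then show ?thesis using ind0[OF ij(2) False] by simp
  qed
  have inner: "(\<Sum>j\<in>{1..n}. (if j \<in> N i then (\<nu>b / real n)\<^sup>2 * K else 0))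
      = real (card (N i)) * ((\<nu>b / real n)\<^sup>2 * K)" for i
  proof -
    have "(\<Sum>j\<in>{1..n}. (if j \<in> N i then (\<nu>b / real n)\<^sup>2 * K else 0))
        = (\<Sum>j\<in>{1..n} \<inter> N i. (\<nu>b / real n)\<^sup>2 * K)"
      by (rule sum.inter_restrict[symmetric]) simp
    also have "{1..n} \<inter> N i = N i" using Nsub[of i] by blast
    finally show ?thesis by simp
  qed
  have "(\<integral>x. ((\<Sum>i\<in>{1..n}. \<nu> n i * (y i x * psi i x)) - (\<Sum>i\<in>{1..n}. \<nu> n i * c i))\<^sup>2 \<partial>M)
      = (\<Sum>i\<in>{1..n}. \<Sum>j\<in>{1..n}. \<nu> n i * \<nu> n j * (\<integral>x. W i x * W j x \<partial>M))"
    unfolding X_eq sq_eq Eeq ..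
  also have "\<dots> \<le> (\<Sum>i\<in>{1..n}. \<Sum>j\<in>{1..n}. (if j \<in> N i then (\<nu>b / real n)\<^sup>2 * K else 0))"
    by (intro sum_mono trm) auto
  also have "\<dots> = (\<Sum>i\<in>{1..n}. real (card (N i))) * ((\<nu>b / real n)\<^sup>2 * K)"
    unfolding inner by (simp add: sum_distrib_right)
  also have "(\<Sum>i\<in>{1..n}. real (card (N i))) = real n * avg_dep M y psi n"
    unfolding avg_dep_def N_def using npos by simp
  also have "real n * avg_dep M y psi n * ((\<nu>b / real n)\<^sup>2 * K) = \<nu>b\<^sup>2 * K * avg_dep M y psi n / real n"
    using npos by (simp add: power2_eq_square field_simps)
  finally have bound: "(\<integral>x. ((\<Sum>i\<in>{1..n}. \<nu> n i * (y i x * psi i x)) - (\<Sum>i\<in>{1..n}. \<nu> n i * c i))\<^sup>2 \<partial>M)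
       \<le> \<nu>b\<^sup>2 * K * avg_dep M y psi n / real n" .
  have "integrable M (\<lambda>x. ((\<Sum>i\<in>{1..n}. \<nu> n i * (y i x * psi i x)) - (\<Sum>i\<in>{1..n}. \<nu> n i * c i))\<^sup>2)"
    unfolding X_eq sq_eq by (rule int)
  with bound show ?thesis by simp
qed

theorem theorem3:
  fixes mu :: "'z measure" and P :: "'w measure"
    and y psi :: "nat \<Rightarrow> 'z \<times> 'w \<Rightarrow> real"
    and Mod :: "nat \<Rightarrow> ('z \<times> 'w \<Rightarrow> real) set"
    and theta :: "nat \<Rightarrow> ('z \<times> 'w \<Rightarrow> real) \<Rightarrow> real"
    and \<nu> :: "nat \<Rightarrow> nat \<Rightarrow> real" and \<nu>bar :: real and p q :: ereal
  assumes mu: "prob_space mu" and P: "prob_space P"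
    and meas_y: "\<And>i. y i \<in> borel_measurable (mu \<Otimes>\<^sub>M P)"
    and model: "\<And>i. closed_L2_subspace (mu \<Otimes>\<^sub>M P) (Mod i)"
    and y_in: "\<And>i. y i \<in> Mod i" and psi_in: "\<And>i. psi i \<in> Mod i"
    and riesz: "\<And>i u. u \<in> Mod i \<Longrightarrow> theta i u = (\<integral>x. u x * psi i x \<partial>(mu \<Otimes>\<^sub>M P))"
    and \<nu>_nonneg: "\<And>n i. i \<in> {1..n} \<Longrightarrow> 0 \<le> \<nu> n i"
    and \<nu>bar: "\<nu>bar > 0" "\<And>n i. i \<in> {1..n} \<Longrightarrow> real n * \<nu> n i \<le> \<nu>bar"
    and dn: "avg_dep (mu \<Otimes>\<^sub>M P) y psi \<in> o(\<lambda>n. real n)"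
    and pq: "2 \<le> p" "2 \<le> q" "1 / p + 1 / q = 1 / 2"
    and y_bdd: "\<exists>C. \<forall>i. Lp_norm_le (mu \<Otimes>\<^sub>M P) p (y i) C"
    and psi_bdd: "\<exists>C. \<forall>i. Lp_norm_le (mu \<Otimes>\<^sub>M P) q (psi i) C"
  shows "(\<lambda>n. \<integral>x. ((\<Sum>i\<in>{1..n}. \<nu> n i * (y i x * psi i x))
                      - (\<Sum>i\<in>{1..n}. \<nu> n i * theta i (y i)))\<^sup>2 \<partial>(mu \<Otimes>\<^sub>M P))
           \<longlonglongrightarrow> 0
       \<and> ((\<exists>B. \<forall>n. avg_dep (mu \<Otimes>\<^sub>M P) y psi n \<le> B) \<longrightarrow>
          bigO_p (mu \<Otimes>\<^sub>M P)
            (\<lambda>n x. (\<Sum>i\<in>{1..n}. \<nu> n i * (y i x * psi i x))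
                   - (\<Sum>i\<in>{1..n}. \<nu> n i * theta i (y i)))
            (\<lambda>n. 1 / sqrt (real n)))"
proof -
  let ?M = "mu \<Otimes>\<^sub>M P"
  interpret PS: prob_space ?M by (rule prob_space_pair[OF mu P])
  have ym[measurable]: "y i \<in> borel_measurable ?M" for i by (rule meas_y)
  have psim[measurable]: "psi i \<in> borel_measurable ?M" for i
    using model[of i] psi_in[of i] unfolding closed_L2_subspace_def L2_fun_def by blast
  obtain Cy where Cy: "\<And>i. Lp_norm_le ?M p (y i) Cy" using y_bdd by blast
  obtain Cp where Cp: "\<And>i. Lp_norm_le ?M q (psi i) Cp" using psi_bdd by blast
  define K where "K = Cy\<^sup>2 * Cp\<^sup>2 + (2 / real_of_ereal p) * Cy powr real_of_ereal p
       + (2 / real_of_ereal q) * Cp powr real_of_ereal q"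
  have sqi: "integrable ?M (\<lambda>x. (y i x * psi i x)\<^sup>2)" and sqb: "(\<integral>x. (y i x * psi i x)\<^sup>2 \<partial>?M) \<le> K" for i
    using sq_bound[OF pq Cy[of i] Cp[of i]] unfolding K_def by auto
  define c where "c i = theta i (y i)" for i
  have c: "c i = (\<integral>x. y i x * psi i x \<partial>?M)" for i unfolding c_def by (rule riesz[OF y_in])
  define X where "X n x = (\<Sum>i\<in>{1..n}. \<nu> n i * (y i x * psi i x)) - (\<Sum>i\<in>{1..n}. \<nu> n i * theta i (y i))" for n x
  define E where "E n = (\<integral>x. (X n x)\<^sup>2 \<partial>?M)" for n
  have Xm[measurable]: "X n \<in> borel_measurable ?M" for n unfolding X_def by measurable
  have main: "integrable ?M (\<lambda>x. (X n x)\<^sup>2) \<and> E n \<le> \<nu>bar\<^sup>2 * K * avg_dep ?M y psi n / real n"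
    if n: "1 \<le> n" for n
    using PS.core[where y=y and psi=psi and K=K and c=c and n=n and \<nu>=\<nu> and \<nu>b=\<nu>bar, OF ym psim sqi sqb c \<nu>_nonneg \<nu>bar(2) n] unfolding X_def E_def c_def by simp
  have K0: "0 \<le> K"
  proof -
    have "0 \<le> (\<integral>x. (y 0 x * psi 0 x)\<^sup>2 \<partial>?M)" by (rule Bochner_Integration.integral_nonneg) simp
    then show ?thesis using sqb[of 0] by linarith
  qed
  have E0: "0 \<le> E n" for n unfolding E_def by (rule Bochner_Integration.integral_nonneg) simp
  have part1: "E \<longlonglongrightarrow> 0"
  proof (rule tendsto_sandwich[of "\<lambda>_. 0" E sequentially "\<lambda>n. \<nu>bar\<^sup>2 * K * (avg_dep ?M y psi n / real n)"])
    show "\<forall>\<^sub>F n in sequentially. 0 \<le> E n" using E0 by simp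
    show "\<forall>\<^sub>F n in sequentially. E n \<le> \<nu>bar\<^sup>2 * K * (avg_dep ?M y psi n / real n)"
      using eventually_ge_at_top[of 1] by eventually_elim (use main in simp)
    show "(\<lambda>_. 0) \<longlonglongrightarrow> (0::real)" by simp
    have "(\<lambda>n. avg_dep ?M y psi n / real n) \<longlonglongrightarrow> 0" using smalloD_tendsto[OF dn] by simp
    then show "(\<lambda>n. \<nu>bar\<^sup>2 * K * (avg_dep ?M y psi n / real n)) \<longlonglongrightarrow> 0"
      by (rule tendsto_mult_right_zero)
  qed
  have part2: "bigO_p ?M X (\<lambda>n. 1 / sqrt (real n))" if B: "\<forall>n. avg_dep ?M y psi n \<le> B" for B
    unfolding bigO_p_def
  proof (intro allI impI)
    fix \<epsilon> :: real assume \<epsilon>: "0 < \<epsilon>"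
    define A where "A = \<nu>bar\<^sup>2 * K * max B 0"
    have A0: "0 \<le> A" unfolding A_def using K0 by simp
    define K' where "K' = sqrt ((A + 1) / \<epsilon>)"
    have K'2: "K'\<^sup>2 = (A + 1) / \<epsilon>" unfolding K'_def using A0 \<epsilon> by simp
    have K'0: "0 < K'" unfolding K'_def using A0 \<epsilon> by simp
    have "\<forall>n\<ge>1. measure ?M {x \<in> space ?M. \<bar>X n x\<bar> > K' * (1 / sqrt (real n))} < \<epsilon>"
    proof (intro allI impI)
      fix n :: nat assume n: "1 \<le> n"
      have npos: "0 < real n" using n by simp
      from main[OF n] have Xi: "integrable ?M (\<lambda>x. (X n x)\<^sup>2)" and En: "E n \<le> \<nu>bar\<^sup>2 * K * avg_dep ?M y psi n / real n" by auto
      have "\<nu>bar\<^sup>2 * K * avg_dep ?M y psi n \<le> A"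
        unfolding A_def using K0 B by (intro mult_left_mono) (auto intro: order_trans[OF _ max.cobounded1])
      then have En': "E n \<le> A / real n" using En npos by (smt (verit) divide_right_mono)
      define t where "t = K'\<^sup>2 / real n"
      have t0: "0 < t" unfolding t_def using K'0 npos by simp
      have sub: "{x \<in> space ?M. \<bar>X n x\<bar> > K' * (1 / sqrt (real n))} \<subseteq> {x \<in> space ?M. (X n x)\<^sup>2 \<ge> t}"
      proof safe
        fix x assume "\<bar>X n x\<bar> > K' * (1 / sqrt (real n))"
        moreover have "0 \<le> K' * (1 / sqrt (real n))" using K'0 npos by simp
        ultimately have "(K' * (1 / sqrt (real n)))\<^sup>2 \<le> \<bar>X n x\<bar>\<^sup>2"
          by (intro power_mono) auto
        moreover have "(K' * (1 / sqrt (real n)))\<^sup>2 = t"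
          unfolding t_def using npos by (simp add: power_mult_distrib power_divide)
        ultimately show "(X n x)\<^sup>2 \<ge> t" by simp
      qed
      have "measure ?M {x \<in> space ?M. \<bar>X n x\<bar> > K' * (1 / sqrt (real n))}
          \<le> measure ?M {x \<in> space ?M. (X n x)\<^sup>2 \<ge> t}"
        by (rule PS.finite_measure_mono[OF sub]) measurable
      also have "\<dots> \<le> E n / t" unfolding E_def
        by (rule integral_Markov_inequality_measure[OF Xi _ _ t0, of "space ?M"]) auto
      also have "\<dots> \<le> (A / real n) / t" by (rule divide_right_mono[OF En']) (use t0 in simp)
      also have "(A / real n) / t = A * \<epsilon> / (A + 1)"
        unfolding t_def K'2 using npos \<epsilon> A0 by (simp add: field_simps)
      also have "\<dots> < \<epsilon>" using A0 \<epsilon> by (simp add: field_simps)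
      finally show "measure ?M {x \<in> space ?M. \<bar>X n x\<bar> > K' * (1 / sqrt (real n))} < \<epsilon>" .
    qed
    then show "\<exists>K N. \<forall>n\<ge>N. measure ?M {x \<in> space ?M. \<bar>X n x\<bar> > K * (1 / sqrt (real n))} < \<epsilon>"
      by blast
  qed
  show ?thesis using part1 part2 unfolding E_def X_def by blast
qed

end
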